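(* Let $a,b,g,m,n>0$ and $0<e<1$, and consider the planar system $$\dot x=a-ex-\frac{xy}{1+gy},\qquad \dot y=\frac{xy}{1+gy}-y-\frac{my}{b+ny}.$$ Let $a_1=(eg+1)n$, $a_2=(b+m)(eg+1)+n(e-a)$, and $$a_4=\frac{[en-(b-m)(eg+1)]+\sqrt{4m(eg+1)[ne-b(eg+1)]}}{n}.$$ Suppose $n>\frac{(eg+1)b^2+m(eg+1)b}{me}$ and $a=a_4$. Let $y_3=-\frac{a_2}{2a_1}$ and $x_3=\frac{a(1+gy_3)}{e+(eg+1)y_3}$, so that $E_3=(x_3,y_3)$ is an endemic equilibrium of the system. Then $E_3$ is degenerate, i.e. the determinant of the Jacobian matrix of the system at $E_3$ is zero.
   Context: The system is a rescaled SIR epidemic model with saturated infection rate and saturated treatment rate. *)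

theory Defs
  imports "HOL-Analysis.Analysis"
begin

definition sir_f1 :: "real \<Rightarrow> real \<Rightarrow> real \<Rightarrow> real \<Rightarrow> real \<Rightarrow> real" where
  "sir_f1 a e g x y = a - e * x - x * y / (1 + g * y)"

definition sir_f2 :: "real \<Rightarrow> real \<Rightarrow> real \<Rightarrow> real \<Rightarrow> real \<Rightarrow> real \<Rightarrow> real" where
  "sir_f2 b g m n x y = x * y / (1 + g * y) - y - m * y / (b + n * y)"

definition sir_jacobian ::
  "real \<Rightarrow> real \<Rightarrow> real \<Rightarrow> real \<Rightarrow> real \<Rightarrow> real \<Rightarrow> real \<Rightarrow> real \<Rightarrow> real^2^2" where
  "sir_jacobian a b e g m n x y =
     vector [vector [deriv (\<lambda>u. sir_f1 a e g u y) x, deriv (\<lambda>v. sir_f1 a e g x v) y],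
             vector [deriv (\<lambda>u. sir_f2 b g m n u y) x, deriv (\<lambda>v. sir_f2 b g m n x v) y]]"

end

theory Submission
  imports Defs
begin

lemma d11: assumes "1 + g*y \<noteq> 0" shows "deriv (\<lambda>u. sir_f1 a e g u y) x = - e - y/(1+g*y)"
proof -
  have "(\<lambda>u. sir_f1 a e g u y) = (\<lambda>u. a - e*u - u*(y/(1+g*y)))" by (auto simp: sir_f1_def)
  moreover have "deriv (\<lambda>u. a - e*u - u*(y/(1+g*y))) x = - e - y/(1+g*y)"
    by (rule DERIV_imp_deriv) (use assms in \<open>auto intro!: derivative_eq_intros\<close>)
  ultimately show ?thesis using assms by simp
qed

lemma d12: assumes "1 + g*y \<noteq> 0"
  shows "deriv (\<lambda>v. sir_f1 a e g x v) y = - x/(1+g*y)^2"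
  unfolding sir_f1_def
  by (rule DERIV_imp_deriv) (use assms in \<open>auto intro!: derivative_eq_intros simp: field_simps power2_eq_square\<close>)

lemma d21: assumes "1 + g*y \<noteq> 0" shows "deriv (\<lambda>u. sir_f2 b g m n u y) x = y/(1+g*y)"
proof -
  have "(\<lambda>u. sir_f2 b g m n u y) = (\<lambda>u. u*(y/(1+g*y)) - y - m*y/(b+n*y))" by (auto simp: sir_f2_def)
  moreover have "deriv (\<lambda>u. u*(y/(1+g*y)) - y - m*y/(b+n*y)) x = y/(1+g*y)"
    by (rule DERIV_imp_deriv) (use assms in \<open>auto intro!: derivative_eq_intros\<close>)
  ultimately show ?thesis using assms by simp
qed

lemma d22: assumes "1 + g*y \<noteq> 0" "b + n*y \<noteq> 0"
  shows "deriv (\<lambda>v. sir_f2 b g m n x v) y = x/(1+g*y)^2 - 1 - m*b/(b+n*y)^2"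
  unfolding sir_f2_def
  by (rule DERIV_imp_deriv) (use assms in \<open>auto intro!: derivative_eq_intros simp: field_simps power2_eq_square\<close>)

lemma detJ: assumes "1 + g*y \<noteq> 0" "b + n*y \<noteq> 0"
  shows "det (sir_jacobian a b e g m n x y) =
     (-e - y/(1+g*y)) * (x/(1+g*y)^2 - 1 - m*b/(b+n*y)^2) + x/(1+g*y)^2 * (y/(1+g*y))"
  unfolding sir_jacobian_def using assms
  by (simp add: det_2 d11 d12 d21 d22)

theorem theorem2p2:
  fixes a b e g m n :: real
  assumes "a > 0" "b > 0" "g > 0" "m > 0" "n > 0" "0 < e" "e < 1"
    and "n > ((e*g + 1) * b^2 + m * (e*g + 1) * b) / (m * e)"
    and "a = ((e*n - (b - m) * (e*g + 1)) + sqrt (4 * m * (e*g + 1) * (n*e - b * (e*g + 1)))) / n"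
  shows "let a1 = (e*g + 1) * n;
             a2 = (b + m) * (e*g + 1) + n * (e - a);
             y3 = - a2 / (2 * a1);
             x3 = a * (1 + g * y3) / (e + (e*g + 1) * y3)
         in det (sir_jacobian a b e g m n x3 y3) = 0"
proof -
  define k where "k = e*g+1"
  define D where "D = 4 * m * k * (n*e - b * k)"
  define s where "s = sqrt D"
  have k0: "k > 0" using assms unfolding k_def by (simp add: add_pos_pos)
  have h8: "n * (m*e) > k * b^2 + m * k * b"
    using assms(8) assms k0 unfolding k_def by (simp add: pos_divide_less_eq)
  have "n*e - b*k > 0"
  proof -
    have "m * (n*e - b*k) > k*b^2" using h8 by (simp add: algebra_simps)
    moreover have "k*b^2 > 0" using k0 assms by simp
    ultimately have "m * (n*e - b*k) > 0" by linarith
    thus ?thesis using assms(4) by (simp add: zero_less_mult_iff)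
  qed
  hence D0: "D > 0" unfolding D_def using k0 assms by simp
  have s2: "s^2 = D" unfolding s_def using D0 by simp
  have s0: "s > 0" unfolding s_def using D0 by simp
  have "s^2 > (2*b*k)^2"
  proof -
    have "(2*b*k)^2 = 4*k*(k*b^2)" by (simp add: power2_eq_square)
    also have "\<dots> < 4*k*(m*(n*e - b*k))"
    proof -
      have "k*b^2 < m*(n*e - b*k)" using h8 by (simp add: algebra_simps)
      thus ?thesis using k0 by simp
    qed
    also have "\<dots> = s^2" using s2 unfolding D_def by (simp add: algebra_simps)
    finally show ?thesis .
  qed
  hence sgt: "s > 2*b*k" using s0 k0 assms
    by (smt (verit) power_mono)
  have an0: "a*n = (e*n - (b - m) * (e*g + 1)) + sqrt (4 * m * (e*g + 1) * (n*e - b * (e*g + 1)))"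
    using assms(5,9) by simp
  have an: "a*n = e*n - (b-m)*k + s" using an0 unfolding k_def s_def D_def by simp
  define y where "y = (s - 2*b*k)/(2*k*n)"
  have y0: "y > 0" unfolding y_def using sgt k0 assms(5) by simp
  have yeq: "- ((b + m) * (e*g + 1) + n * (e - a)) / (2 * ((e*g + 1) * n)) = y"
  proof -
    have num: "(b + m) * (e*g + 1) + n * (e - a) = 2*b*k - s"
    proof -
      have "(b + m) * (e*g + 1) + n * (e - a) = (b+m)*k + n*e - a*n" unfolding k_def by (simp add: algebra_simps)
      also have "\<dots> = 2*b*k - s" using an by (simp add: algebra_simps)
      finally show ?thesis .
    qed
    show ?thesis unfolding num y_def k_def[symmetric] using k0 assms(5) an by (simp add: field_simps algebra_simps)
  qed
  define u where "u = 1 + g*y"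
  define w where "w = e + k*y"
  have u0: "u > 0" unfolding u_def using y0 assms(3) by (smt (verit) mult_pos_pos)
  have w0: "w > 0" unfolding w_def using y0 assms(6) k0 by (smt (verit) mult_pos_pos)
  have bny: "b + n*y = s/(2*k)" unfolding y_def using k0 assms(5) by (simp add: field_simps)
  have wu: "w = e*u + y" unfolding w_def u_def k_def by (simp add: algebra_simps)
  define c where "c = m*b/(b+n*y)^2"
  have c_eq: "c = 4*m*b*k^2/s^2" unfolding c_def bny using k0 s0 by (simp add: field_simps power2_eq_square)
  have w_eq: "w = (2*e*n + s - 2*b*k)/(2*n)" unfolding w_def y_def using k0 assms(5) by (simp add: field_simps)
  have a_eq: "a = (e*n - b*k + m*k + s)/n" using an assms(5) by (simp add: field_simps)
  define PA where "PA = 2*e*n - 2*b*k"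
  define PB where "PB = 4*m*b*k^2"
  define PC where "PC = e*n - b*k + m*k"
  have poly: "(PA+s)^2*(s^2+PB) - 4*n*e*(PC+s)* s^2
      = (s^2 - D) * (s^2 + (2*PA - 4*n*e) * s + (PA^2 + PB - 4*n*e*PC + D))"
    unfolding PA_def PB_def PC_def D_def by algebra
  have key0: "(PA+s)^2*(s^2+PB) = 4*n*e*(PC+s)* s^2" using poly s2 by simp
  have key: "w^2 * (1 + c) = a*e"
  proof -
    have "w^2 * (1+c) = (PA+s)^2*(s^2+PB) / (4*n^2* s^2)"
      unfolding w_eq c_eq PA_def PB_def using s0 assms(5) by (simp add: field_simps power2_eq_square)
    also have "\<dots> = 4*n*e*(PC+s)* s^2 / (4*n^2* s^2)" using key0 by simp
    also have "\<dots> = a*e" unfolding a_eq PC_def using s0 assms(5) by (simp add: field_simps power2_eq_square)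
    finally show ?thesis .
  qed
  define x where "x = a*u/w"
  have alg: "(-e - y/u) * (x/u^2 - 1 - c) + x/u^2 * (y/u) = (w^2*(1+c) - a*e)/(u*w)"
  proof -
    have "-e - y/u = -w/u" using u0 wu by (simp add: field_simps)
    moreover have "x/u^2 = a/(u*w)" unfolding x_def using u0 w0 by (simp add: field_simps power2_eq_square)
    ultimately have "(-e - y/u) * (x/u^2 - 1 - c) + x/u^2 * (y/u) = (-w/u) * (a/(u*w) - 1 - c) + a/(u*w) * (y/u)"
      by simp
    also have "\<dots> = (w^2*(1+c) - a*e)/(u*w)"
    proof -
      have yw: "y = w - e*u" using wu by simp
      show ?thesis unfolding yw using u0 w0 by (simp add: field_simps power2_eq_square)
    qed
    finally show ?thesis .
  qed
  have "det (sir_jacobian a b e g m n x y) = (w^2*(1+c) - a*e)/(u*w)"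
    using detJ[of g y b n a e m x] u0 bny s0 k0 alg unfolding u_def[symmetric] c_def[symmetric] by simp
  also have "\<dots> = 0" using key by simp
  finally have "det (sir_jacobian a b e g m n x y) = 0" .
  moreover have "a * (1 + g * y) / (e + (e*g + 1) * y) = x"
    unfolding x_def u_def w_def k_def ..
  ultimately show ?thesis unfolding Let_def yeq by simp
qed

end
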